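(* The top cycle satisfies the TS-exclusive monotonicity criterion and the TS-exclusive negative monotonicity (ENM) criterion.
   Context: A tournament $T=(V(T),\succ)$ is a finite set of candidates with an asymmetric and complete binary relation $\succ$. $N^+_T(c)=\{b: c\succ b\}$; $T[B]$ is the subtournament induced by $B$. The top cycle $TC(T)$ is the unique minimal nonempty subset $X\subseteq V(T)$ such that $x\succ y$ for every $x\in X$ and every $y\in V(T)\setminus X$. For a tournament solution $f$ (a map sending every tournament $T$ to a nonempty subset of $V(T)$), say $(T,T')$ with $T=(\mathcal{C},\succ)$, $T'=(\mathcal{C},\succ')$ is a $c$-improvement if $T[\mathcal{C}\setminus\{c\}]=T'[\mathcal{C}\setminus\{c\}]$ and $N^+_T(c)\subseteq N^+_{T'}(c)$. - $f$ is TS-exclusive monotonic if for every $c$-improvement $(T,T')$ with $c\in f(T)$, we have $c\in f(T')$ and $f(T')\subseteq f(T)$. - $f$ satisfies TS-ENM if for every $c$-improvement $(T,T')$ with $c\notin f(T)$, $f(T')\not\subseteq f(T)$ implies $c\in f(T')$. *)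

theory Defs
  imports Main
begin

text \<open>A tournament on candidate set C is a finite nonempty set C with an asymmetric,
complete (on distinct pairs) relation R \<subseteq> C \<times> C; (x,y) \<in> R means x beats y.\<close>

definition tournament :: "'a set \<Rightarrow> ('a \<times> 'a) set \<Rightarrow> bool" where
  "tournament C R \<longleftrightarrow> finite C \<and> C \<noteq> {} \<and> R \<subseteq> C \<times> C \<and>
     (\<forall>x y. (x, y) \<in> R \<longrightarrow> (y, x) \<notin> R) \<and>
     (\<forall>x\<in>C. \<forall>y\<in>C. x \<noteq> y \<longrightarrow> (x, y) \<in> R \<or> (y, x) \<in> R)"

definition out_nbhd :: "('a \<times> 'a) set \<Rightarrow> 'a \<Rightarrow> 'a set" where
  "out_nbhd R c = {b. (c, b) \<in> R}"

definition restrict_rel :: "('a \<times> 'a) set \<Rightarrow> 'a set \<Rightarrow> ('a \<times> 'a) set" where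
  "restrict_rel R B = R \<inter> (B \<times> B)"

definition dominant_set :: "'a set \<Rightarrow> ('a \<times> 'a) set \<Rightarrow> 'a set \<Rightarrow> bool" where
  "dominant_set C R X \<longleftrightarrow> X \<noteq> {} \<and> X \<subseteq> C \<and> (\<forall>x\<in>X. \<forall>y\<in>C - X. (x, y) \<in> R)"

definition top_cycle :: "'a set \<Rightarrow> ('a \<times> 'a) set \<Rightarrow> 'a set" where
  "top_cycle C R = (THE X. dominant_set C R X \<and> (\<forall>Y. dominant_set C R Y \<and> Y \<subseteq> X \<longrightarrow> Y = X))"

definition c_improvement :: "'a set \<Rightarrow> ('a \<times> 'a) set \<Rightarrow> ('a \<times> 'a) set \<Rightarrow> 'a \<Rightarrow> bool" where
  "c_improvement C R R' c \<longleftrightarrow> tournament C R \<and> tournament C R' \<and> c \<in> C \<and>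
     restrict_rel R (C - {c}) = restrict_rel R' (C - {c}) \<and>
     out_nbhd R c \<subseteq> out_nbhd R' c"

type_synonym 'a tsolution = "'a set \<Rightarrow> ('a \<times> 'a) set \<Rightarrow> 'a set"

definition TS_exclusive_monotonic :: "'a tsolution \<Rightarrow> bool" where
  "TS_exclusive_monotonic f \<longleftrightarrow> (\<forall>C R R' c. c_improvement C R R' c \<and> c \<in> f C R \<longrightarrow>
      c \<in> f C R' \<and> f C R' \<subseteq> f C R)"

definition TS_ENM :: "'a tsolution \<Rightarrow> bool" where
  "TS_ENM f \<longleftrightarrow> (\<forall>C R R' c. c_improvement C R R' c \<and> c \<notin> f C R \<longrightarrow>
      (\<not> f C R' \<subseteq> f C R \<longrightarrow> c \<in> f C R'))"

end

theory Submission
  imports Defs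
begin

lemma dom_chain:
  assumes "tournament C R" "dominant_set C R X" "dominant_set C R Y"
  shows "X \<subseteq> Y \<or> Y \<subseteq> X"
proof (rule ccontr)
  assume "\<not> (X \<subseteq> Y \<or> Y \<subseteq> X)"
  then obtain x y where "x \<in> X" "x \<notin> Y" "y \<in> Y" "y \<notin> X" by blast
  with assms show False unfolding dominant_set_def tournament_def by blast
qed

lemma tc_props:
  assumes T: "tournament C R"
  shows "dominant_set C R (top_cycle C R) \<and> (\<forall>Y. dominant_set C R Y \<longrightarrow> top_cycle C R \<subseteq> Y)"
proof -
  have fin: "finite C" and ne: "C \<noteq> {}" using T unfolding tournament_def by auto
  have "dominant_set C R C" using ne unfolding dominant_set_def by auto
  then have ex: "\<exists>n X. dominant_set C R X \<and> card X = n" by blast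
  obtain n where "\<exists>X. dominant_set C R X \<and> card X = n"
    and nmin: "\<And>m. m < n \<Longrightarrow> \<not> (\<exists>X. dominant_set C R X \<and> card X = m)"
    using ex_has_least_nat[where P="\<lambda>n. \<exists>X. dominant_set C R X \<and> card X = n" and m=id]
    ex by (metis id_apply not_le)
  then obtain X where dX: "dominant_set C R X" and cX: "card X = n" by blast
  have least: "\<forall>Y. dominant_set C R Y \<longrightarrow> X \<subseteq> Y"
  proof (intro allI impI)
    fix Y assume dY: "dominant_set C R Y"
    show "X \<subseteq> Y"
    proof (rule ccontr)
      assume "\<not> X \<subseteq> Y"
      with dom_chain[OF T dX dY] have "Y \<subset> X" by blast
      moreover have "finite X" using dX fin unfolding dominant_set_def by (auto intro: finite_subset)
      ultimately have "card Y < n" using cX psubset_card_mono by blast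
      with nmin dY show False by blast
    qed
  qed
  have "top_cycle C R = X"
    unfolding top_cycle_def
  proof (rule the_equality)
    show "dominant_set C R X \<and> (\<forall>Y. dominant_set C R Y \<and> Y \<subseteq> X \<longrightarrow> Y = X)"
      using dX least by blast
  next
    fix Z assume "dominant_set C R Z \<and> (\<forall>Y. dominant_set C R Y \<and> Y \<subseteq> Z \<longrightarrow> Y = Z)"
    with least dX show "Z = X" by blast
  qed
  with dX least show ?thesis by simp
qed

lemma edge_same:
  assumes "c_improvement C R R' c" "x \<noteq> c" "y \<noteq> c" "x \<in> C" "y \<in> C"
  shows "(x, y) \<in> R \<longleftrightarrow> (x, y) \<in> R'"
proof -
  have "restrict_rel R (C - {c}) = restrict_rel R' (C - {c})"
    using assms(1) unfolding c_improvement_def by blast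
  then have "(x,y) \<in> restrict_rel R (C - {c}) \<longleftrightarrow> (x,y) \<in> restrict_rel R' (C - {c})" by simp
  with assms show ?thesis unfolding restrict_rel_def by auto
qed

lemma out_mono:
  assumes "c_improvement C R R' c" "(c, y) \<in> R"
  shows "(c, y) \<in> R'"
  using assms unfolding c_improvement_def out_nbhd_def by blast

lemma dom_back:
  assumes imp: "c_improvement C R R' c" and d: "dominant_set C R' X" and cX: "c \<notin> X"
  shows "dominant_set C R X"
  unfolding dominant_set_def
proof (intro conjI ballI)
  show "X \<noteq> {}" "X \<subseteq> C" using d unfolding dominant_set_def by auto
next
  fix x y assume x: "x \<in> X" and y: "y \<in> C - X"
  have T: "tournament C R" and T': "tournament C R'" and c: "c \<in> C"
    using imp unfolding c_improvement_def by auto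
  have xC: "x \<in> C" and xy': "(x, y) \<in> R'" using d x y unfolding dominant_set_def by auto
  have xc: "x \<noteq> c" using x cX by auto
  show "(x, y) \<in> R"
  proof (cases "y = c")
    case True
    have "(c, x) \<notin> R'" using T' xy' True unfolding tournament_def by blast
    then have "(c, x) \<notin> R" using out_mono[OF imp] by blast
    then show ?thesis using T True xC c xc unfolding tournament_def by blast
  next
    case False
    then show ?thesis using edge_same[OF imp xc False xC] y xy' by auto
  qed
qed

lemma dom_fwd:
  assumes imp: "c_improvement C R R' c" and d: "dominant_set C R X"
    and cc: "c \<notin> X \<longrightarrow> (\<forall>x\<in>X. (x, c) \<in> R')"
  shows "dominant_set C R' X"
  unfolding dominant_set_def
proof (intro conjI ballI)
  show "X \<noteq> {}" "X \<subseteq> C" using d unfolding dominant_set_def by auto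
next
  fix x y assume x: "x \<in> X" and y: "y \<in> C - X"
  have xC: "x \<in> C" and xy: "(x, y) \<in> R" using d x y unfolding dominant_set_def by auto
  show "(x, y) \<in> R'"
  proof (cases "x = c")
    case True then show ?thesis using out_mono[OF imp] xy by blast
  next
    case xc: False
    show ?thesis
    proof (cases "y = c")
      case True then show ?thesis using cc x y by blast
    next
      case False
      then show ?thesis using edge_same[OF imp xc False xC] y xy by auto
    qed
  qed
qed

theorem lemma1:
  shows "TS_exclusive_monotonic (top_cycle :: 'a tsolution) \<and> TS_ENM (top_cycle :: 'a tsolution)"
proof
  show "TS_exclusive_monotonic (top_cycle :: 'a tsolution)"
    unfolding TS_exclusive_monotonic_def
  proof (intro allI impI)
    fix C R R' and c :: 'a
    assume a: "c_improvement C R R' c \<and> c \<in> top_cycle C R"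
    then have imp: "c_improvement C R R' c" and cin: "c \<in> top_cycle C R" by auto
    have T: "tournament C R" and T': "tournament C R'" using imp unfolding c_improvement_def by auto
    note P = tc_props[OF T] and P' = tc_props[OF T']
    have "dominant_set C R' (top_cycle C R)"
      by (rule dom_fwd[OF imp]) (use P cin in auto)
    then have sub: "top_cycle C R' \<subseteq> top_cycle C R" using P' by blast
    have "c \<in> top_cycle C R'"
    proof (rule ccontr)
      assume "c \<notin> top_cycle C R'"
      then have "dominant_set C R (top_cycle C R')" using dom_back[OF imp] P' by blast
      then have "top_cycle C R \<subseteq> top_cycle C R'" using P by blast
      with cin \<open>c \<notin> top_cycle C R'\<close> show False by blast
    qed
    with sub show "c \<in> top_cycle C R' \<and> top_cycle C R' \<subseteq> top_cycle C R" by blast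
  qed
next
  show "TS_ENM (top_cycle :: 'a tsolution)"
    unfolding TS_ENM_def
  proof (intro allI impI)
    fix C R R' and c :: 'a
    assume a: "c_improvement C R R' c \<and> c \<notin> top_cycle C R"
      and ns: "\<not> top_cycle C R' \<subseteq> top_cycle C R"
    then have imp: "c_improvement C R R' c" by auto
    have T: "tournament C R" and T': "tournament C R'" using imp unfolding c_improvement_def by auto
    note P = tc_props[OF T] and P' = tc_props[OF T']
    show "c \<in> top_cycle C R'"
    proof (rule ccontr)
      assume nc: "c \<notin> top_cycle C R'"
      then have "dominant_set C R (top_cycle C R')" using dom_back[OF imp] P' by blast
      then have XX: "top_cycle C R \<subseteq> top_cycle C R'" using P by blast
      have cC: "c \<in> C" using imp unfolding c_improvement_def by auto
      have "c \<notin> top_cycle C R \<longrightarrow> (\<forall>x\<in>top_cycle C R. (x, c) \<in> R')"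
        using XX nc cC P' unfolding dominant_set_def by blast
      then have "dominant_set C R' (top_cycle C R)" using dom_fwd[OF imp] P by blast
      then have "top_cycle C R' \<subseteq> top_cycle C R" using P' by blast
      with ns show False by blast
    qed
  qed
qed

end
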